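(* Fix $(\varepsilon,\delta)\in(0,1)\times(0,\delta_0]$ and suppose $(R_1,R_2)\in\mathcal S^\ast(\varepsilon,\delta|p_{X_1X_2},p_{K_1K_2})$. Then for every $\gamma>0$ there exists $n_0=n_0(\gamma)$ such that for all $n\ge n_0$, $$R_i\le H(K_i)+2\gamma+\zeta_n(\gamma,\varepsilon,\delta),\quad i=1,2.$$
   Context: All logarithms are base 2. $\mathcal X_1,\mathcal X_2$ are finite fields. $(X_1,X_2)$ has joint pmf $p_{X_1X_2}$ on $\mathcal X_1\times\mathcal X_2$ and $(K_1,K_2)$ has joint pmf $p_{K_1K_2}$ on $\mathcal X_1\times\mathcal X_2$. For block length $n$, $(\mathbf X_1,\mathbf X_2)$ is i.i.d. with law $p^n_{X_1X_2}$ (source), $(\mathbf K_1,\mathbf K_2)$ is i.i.d. with law $p^n_{K_1K_2}$ (keys), and the keys are independent of the sources. A distributed source encryption system at block length $n$ consists of finite sets $\mathcal C_i^{(n)}$, encryption maps $\Phi_i^{(n)}:\mathcal X_i^n\times\mathcal X_i^n\to\mathcal C_i^{(n)}$ (key, plaintext) and a decryption map $\Psi^{(n)}:\mathcal X_1^n\times\mathcal X_2^n\times\mathcal C_1^{(n)}\times\mathcal C_2^{(n)}\to\mathcal X_1^n\times\mathcal X_2^n$, such that there exist maps $\phi_i^{(n)}:\mathcal X_i^n\to\mathcal M_i^{(n)}$ (finite $\mathcal M_i^{(n)}$) and $\psi^{(n)}$ with $\Psi^{(n)}(\mathbf k_1,\mathbf k_2,\Phi_1^{(n)}(\mathbf k_1,\mathbf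 x_1),\Phi_2^{(n)}(\mathbf k_2,\mathbf x_2))=\psi^{(n)}(\phi_1^{(n)}(\mathbf x_1),\phi_2^{(n)}(\mathbf x_2))$ for all keys and plaintexts. Ciphertexts: $C_i^{(n)}=\Phi_i^{(n)}(\mathbf K_i,\mathbf X_i)$. Correct decoding set $\mathcal D^{(n)}:=\{(\mathbf x_1,\mathbf x_2):\psi^{(n)}(\phi_1^{(n)}(\mathbf x_1),\phi_2^{(n)}(\mathbf x_2))=(\mathbf x_1,\mathbf x_2)\}$; error probability $p_{\rm e}:=\Pr[(\mathbf X_1,\mathbf X_2)\notin\mathcal D^{(n)}]$. Fix a constant $\delta_0>0$. For $(\varepsilon,\delta)\in(0,1)\times[0,\delta_0]$, $(R_1,R_2)$ is an $(\varepsilon,\delta)$-reliable and secure rate pair if there is a sequence of systems $\{(\Phi_1^{(n)},\Phi_2^{(n)},\Psi^{(n)})\}_{n\ge1}$ such that for every $\gamma>0$ there is $n_0$ with, for all $n\ge n_0$: $\frac1n\log|\mathcal C_i^{(n)}|\le R_i+\gamma$ ($i=1,2$), $p_{\rm e}\le\varepsilon$, and $I(C_1^{(n)}C_2^{(n)};\mathbf X_1\mathbf X_2)\le\delta$. $\mathcal R^\ast(\varepsilon,\delta|p_{X_1X_2},p_{K_1K_2})$ is the set of such pairs and $\mathcal S^\ast(\varepsilon,\delta|p_{X_1X_2},p_{K_1K_2}):=\mathcal R^\ast(\varepsilon,\delta|p_{X_1X_2},p_{K_1K_2})\cap\{(R_1,R_2):R_1+R_2=H(X_1X_2)\}$. For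 $\gamma>0$ let $\tilde{\mathcal A}^{(n)}_\gamma$ be the set of $(\mathbf x_1,\mathbf x_2)\in\mathcal X_1^n\times\mathcal X_2^n$ with $\bigl|\frac1n\log\frac1{p^n_{X_i|X_{3-i}}(\mathbf x_i|\mathbf x_{3-i})}-H(X_i|X_{3-i})\bigr|\le\gamma$ for $i=1,2$ and $\bigl|\frac1n\log\frac1{p^n_{X_1X_2}(\mathbf x_1,\mathbf x_2)}-H(X_1X_2)\bigr|\le\gamma$. Set $\nu_n(\gamma):=p^n_{X_1X_2}((\tilde{\mathcal A}^{(n)}_\gamma)^c)$, $\nu_n(\gamma,\varepsilon):=\nu_n(\gamma)+\varepsilon$, and $\zeta_n(\gamma,\varepsilon,\delta):=\frac1n\Bigl[\frac{\delta}{1-\nu_n(\gamma,\varepsilon)}+\log\frac1{1-\nu_n(\gamma,\varepsilon)}\Bigr]$. *)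

theory Defs
  imports "HOL-Probability.Probability"
begin

definition ent :: "'u pmf \<Rightarrow> real" where
  "ent p = (\<Sum>x\<in>set_pmf p. - pmf p x * log 2 (pmf p x))"

definition cond_ent :: "('u \<times> 'v) pmf \<Rightarrow> real" where
  "cond_ent q = (\<Sum>z\<in>set_pmf q.
      - pmf q z * log 2 (pmf q z / pmf (map_pmf snd q) (snd z)))"

definition mutual_info :: "('u \<times> 'v) pmf \<Rightarrow> real" where
  "mutual_info q = (\<Sum>z\<in>set_pmf q.
      pmf q z * log 2 (pmf q z / (pmf (map_pmf fst q) (fst z) * pmf (map_pmf snd q) (snd z))))"

definition swap_pmf :: "('u \<times> 'v) pmf \<Rightarrow> ('v \<times> 'u) pmf" where
  "swap_pmf q = map_pmf (\<lambda>(u, v). (v, u)) q"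

fun iid_pmf :: "nat \<Rightarrow> 'u pmf \<Rightarrow> 'u list pmf" where
  "iid_pmf 0 p = return_pmf []"
| "iid_pmf (Suc n) p = bind_pmf p (\<lambda>x. map_pmf (\<lambda>xs. x # xs) (iid_pmf n p))"

definition block_pmf :: "nat \<Rightarrow> ('a \<times> 'b) pmf \<Rightarrow> ('a list \<times> 'b list) pmf" where
  "block_pmf n p = map_pmf (\<lambda>zs. (map fst zs, map snd zs)) (iid_pmf n p)"

definition block_cond :: "('u \<times> 'v) pmf \<Rightarrow> 'u list \<Rightarrow> 'v list \<Rightarrow> real" where
  "block_cond q us vs = (\<Prod>(u, v)\<leftarrow>zip us vs. pmf q (u, v) / pmf (map_pmf snd q) v)"

definition block_joint :: "('u \<times> 'v) pmf \<Rightarrow> 'u list \<Rightarrow> 'v list \<Rightarrow> real" where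
  "block_joint q us vs = (\<Prod>(u, v)\<leftarrow>zip us vs. pmf q (u, v))"

definition typ_set :: "('a \<times> 'b) pmf \<Rightarrow> nat \<Rightarrow> real \<Rightarrow> ('a list \<times> 'b list) set" where
  "typ_set p n \<gamma> = {(x1, x2). length x1 = n \<and> length x2 = n \<and>
      \<bar>(1 / real n) * log 2 (1 / block_cond p x1 x2) - cond_ent p\<bar> \<le> \<gamma> \<and>
      \<bar>(1 / real n) * log 2 (1 / block_cond (swap_pmf p) x2 x1) - cond_ent (swap_pmf p)\<bar> \<le> \<gamma> \<and>
      \<bar>(1 / real n) * log 2 (1 / block_joint p x1 x2) - ent p\<bar> \<le> \<gamma>}"

definition nu :: "('a \<times> 'b) pmf \<Rightarrow> nat \<Rightarrow> real \<Rightarrow> real" where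
  "nu p n \<gamma> = measure_pmf.prob (block_pmf n p) (- typ_set p n \<gamma>)"

definition nu_eps :: "('a \<times> 'b) pmf \<Rightarrow> nat \<Rightarrow> real \<Rightarrow> real \<Rightarrow> real" where
  "nu_eps p n \<gamma> \<epsilon> = nu p n \<gamma> + \<epsilon>"

definition zeta :: "('a \<times> 'b) pmf \<Rightarrow> nat \<Rightarrow> real \<Rightarrow> real \<Rightarrow> real \<Rightarrow> real" where
  "zeta p n \<gamma> \<epsilon> \<delta> = (1 / real n) *
     (\<delta> / (1 - nu_eps p n \<gamma> \<epsilon>) + log 2 (1 / (1 - nu_eps p n \<gamma> \<epsilon>)))"

text \<open>A system at block length n. Ciphertext sets C_i and message sets M_i are
  (w.l.o.g.) finite sets of natural numbers. Phi_i takes (key, plaintext).\<close>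
definition is_system ::
  "nat \<Rightarrow> ('a list \<Rightarrow> 'a list \<Rightarrow> nat) \<Rightarrow> ('b list \<Rightarrow> 'b list \<Rightarrow> nat)
   \<Rightarrow> ('a list \<Rightarrow> 'b list \<Rightarrow> nat \<Rightarrow> nat \<Rightarrow> 'a list \<times> 'b list)
   \<Rightarrow> nat set \<Rightarrow> nat set
   \<Rightarrow> ('a list \<Rightarrow> nat) \<Rightarrow> ('b list \<Rightarrow> nat) \<Rightarrow> (nat \<Rightarrow> nat \<Rightarrow> 'a list \<times> 'b list)
   \<Rightarrow> nat set \<Rightarrow> nat set \<Rightarrow> bool" where
  "is_system n \<Phi>1 \<Phi>2 \<Psi> C1 C2 \<phi>1 \<phi>2 \<psi> M1 M2 \<longleftrightarrow>
     finite C1 \<and> finite C2 \<and> finite M1 \<and> finite M2 \<and>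
     (\<forall>k x. length k = n \<and> length x = n \<longrightarrow> \<Phi>1 k x \<in> C1) \<and>
     (\<forall>k x. length k = n \<and> length x = n \<longrightarrow> \<Phi>2 k x \<in> C2) \<and>
     (\<forall>x. length x = n \<longrightarrow> \<phi>1 x \<in> M1) \<and>
     (\<forall>x. length x = n \<longrightarrow> \<phi>2 x \<in> M2) \<and>
     (\<forall>k1 k2 x1 x2. length k1 = n \<and> length k2 = n \<and> length x1 = n \<and> length x2 = n \<longrightarrow>
        \<Psi> k1 k2 (\<Phi>1 k1 x1) (\<Phi>2 k2 x2) = \<psi> (\<phi>1 x1) (\<phi>2 x2))"

definition dec_set :: "nat \<Rightarrow> ('a list \<Rightarrow> nat) \<Rightarrow> ('b list \<Rightarrow> nat)
   \<Rightarrow> (nat \<Rightarrow> nat \<Rightarrow> 'a list \<times> 'b list) \<Rightarrow> ('a list \<times> 'b list) set" where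
  "dec_set n \<phi>1 \<phi>2 \<psi> = {(x1, x2). length x1 = n \<and> length x2 = n \<and> \<psi> (\<phi>1 x1) (\<phi>2 x2) = (x1, x2)}"

definition cipher_source_pmf ::
  "nat \<Rightarrow> ('a \<times> 'b) pmf \<Rightarrow> ('a \<times> 'b) pmf \<Rightarrow> ('a list \<Rightarrow> 'a list \<Rightarrow> nat) \<Rightarrow> ('b list \<Rightarrow> 'b list \<Rightarrow> nat)
   \<Rightarrow> ((nat \<times> nat) \<times> ('a list \<times> 'b list)) pmf" where
  "cipher_source_pmf n pX pK \<Phi>1 \<Phi>2 =
     map_pmf (\<lambda>((k1, k2), (x1, x2)). ((\<Phi>1 k1 x1, \<Phi>2 k2 x2), (x1, x2)))
       (pair_pmf (block_pmf n pK) (block_pmf n pX))"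

definition R_star :: "real \<Rightarrow> real \<Rightarrow> ('a::{finite,field} \<times> 'b::{finite,field}) pmf
    \<Rightarrow> ('a \<times> 'b) pmf \<Rightarrow> (real \<times> real) set" where
  "R_star \<epsilon> \<delta> pX pK = {(R1, R2).
     \<exists>(\<Phi>1 :: nat \<Rightarrow> 'a list \<Rightarrow> 'a list \<Rightarrow> nat) (\<Phi>2 :: nat \<Rightarrow> 'b list \<Rightarrow> 'b list \<Rightarrow> nat)
      (\<Psi> :: nat \<Rightarrow> 'a list \<Rightarrow> 'b list \<Rightarrow> nat \<Rightarrow> nat \<Rightarrow> 'a list \<times> 'b list)
      (C1 :: nat \<Rightarrow> nat set) (C2 :: nat \<Rightarrow> nat set)
      (\<phi>1 :: nat \<Rightarrow> 'a list \<Rightarrow> nat) (\<phi>2 :: nat \<Rightarrow> 'b list \<Rightarrow> nat)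
      (\<psi> :: nat \<Rightarrow> nat \<Rightarrow> nat \<Rightarrow> 'a list \<times> 'b list)
      (M1 :: nat \<Rightarrow> nat set) (M2 :: nat \<Rightarrow> nat set).
       (\<forall>n\<ge>1. is_system n (\<Phi>1 n) (\<Phi>2 n) (\<Psi> n) (C1 n) (C2 n) (\<phi>1 n) (\<phi>2 n) (\<psi> n) (M1 n) (M2 n)) \<and>
       (\<forall>\<gamma>>0. \<exists>n0. \<forall>n\<ge>n0. n \<ge> 1 \<longrightarrow>
          (1 / real n) * log 2 (real (card (C1 n))) \<le> R1 + \<gamma> \<and>
          (1 / real n) * log 2 (real (card (C2 n))) \<le> R2 + \<gamma> \<and>
          measure_pmf.prob (block_pmf n pX) (- dec_set n (\<phi>1 n) (\<phi>2 n) (\<psi> n)) \<le> \<epsilon> \<and>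
          mutual_info (cipher_source_pmf n pX pK (\<Phi>1 n) (\<Phi>2 n)) \<le> \<delta>)}"

definition S_star :: "real \<Rightarrow> real \<Rightarrow> ('a::{finite,field} \<times> 'b::{finite,field}) pmf
    \<Rightarrow> ('a \<times> 'b) pmf \<Rightarrow> (real \<times> real) set" where
  "S_star \<epsilon> \<delta> pX pK = R_star \<epsilon> \<delta> pX pK \<inter> {(R1, R2). R1 + R2 = ent pX}"

end

theory Submission
  imports Defs
begin


definition E :: "'a pmf \<Rightarrow> ('a \<Rightarrow> real) \<Rightarrow> real" where
  "E p f = (\<Sum>x\<in>set_pmf p. pmf p x * f x)"

lemma E_integral: "finite (set_pmf p) \<Longrightarrow> E p f = measure_pmf.expectation p f"
  unfolding E_def by (subst integral_measure_pmf_real[where A="set_pmf p"]) (auto simp: mult.commute)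

lemma E_map: "finite (set_pmf p) \<Longrightarrow> E (map_pmf g p) f = E p (\<lambda>x. f (g x))"
  by (simp add: E_integral)

lemma E_pair: "finite (set_pmf p) \<Longrightarrow> finite (set_pmf q) \<Longrightarrow>
   E (pair_pmf p q) f = E p (\<lambda>a. E q (\<lambda>b. f (a, b)))"
  unfolding E_def by (simp add: sum.cartesian_product sum_distrib_left case_prod_unfold) (rule sum.cong, auto simp: pmf_pair)

lemma E_add: "E p (\<lambda>x. f x + g x) = E p f + E p g"
  unfolding E_def by (simp add: distrib_left sum.distrib)

lemma E_cmult: "E p (\<lambda>x. c * f x) = c * E p f"
  unfolding E_def by (simp add: sum_distrib_left mult.left_commute)

lemma E_const: "finite (set_pmf p) \<Longrightarrow> E p (\<lambda>x. c) = c"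
  unfolding E_def by (simp add: sum_distrib_right[symmetric] sum_pmf_eq_1)

lemma E_diff: "E p (\<lambda>x. f x - g x) = E p f - E p g"
  unfolding E_def by (simp add: right_diff_distrib sum_subtractf)

lemma E_mono: "(\<And>x. x \<in> set_pmf p \<Longrightarrow> f x \<le> g x) \<Longrightarrow> E p f \<le> E p g"
  unfolding E_def by (intro sum_mono mult_left_mono) auto

lemma E_cong: "(\<And>x. x \<in> set_pmf p \<Longrightarrow> f x = g x) \<Longrightarrow> E p f = E p g"
  unfolding E_def by (intro sum.cong) auto

lemma E_nonneg: "(\<And>x. x \<in> set_pmf p \<Longrightarrow> 0 \<le> f x) \<Longrightarrow> 0 \<le> E p f"
  unfolding E_def by (intro sum_nonneg mult_nonneg_nonneg) auto

lemma prob_finite: "finite (set_pmf p) \<Longrightarrow> measure_pmf.prob p B = (\<Sum>x\<in>set_pmf p \<inter> B. pmf p x)"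
  by (metis Int_commute finite_Int measure_Int_set_pmf measure_measure_pmf_finite)

lemma markov_E: assumes "finite (set_pmf p)" "t > 0" "\<And>x. x \<in> set_pmf p \<Longrightarrow> 0 \<le> f x"
  shows "measure_pmf.prob p {x. t \<le> f x} \<le> E p f / t"
proof -
  have "measure_pmf.prob p {x. t \<le> f x} = (\<Sum>x\<in>set_pmf p \<inter> {x. t \<le> f x}. pmf p x)"
    using assms by (simp add: prob_finite)
  also have "\<dots> \<le> (\<Sum>x\<in>set_pmf p \<inter> {x. t \<le> f x}. pmf p x * (f x / t))"
    using assms(2) by (intro sum_mono) (auto intro!: mult_right_mono simp: field_simps)
  also have "\<dots> \<le> (\<Sum>x\<in>set_pmf p. pmf p x * (f x / t))"
    using assms by (intro sum_mono2) auto
  also have "\<dots> = E p f / t" unfolding E_def by (simp add: sum_divide_distrib)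
  finally show ?thesis .
qed

lemma iid_Suc_map: "iid_pmf (Suc n) p = map_pmf (\<lambda>(x, xs). x # xs) (pair_pmf p (iid_pmf n p))"
  by (simp add: pair_pmf_def map_bind_pmf map_pmf_def[symmetric] map_pmf_comp)

lemma set_iid: "set_pmf (iid_pmf n p) = {zs. length zs = n \<and> set zs \<subseteq> set_pmf p}"
proof (induction n)
  case 0 then show ?case by auto
next
  case (Suc n)
  show ?case unfolding iid_Suc_map Suc set_map_pmf set_pair_pmf
    by (auto simp: length_Suc_conv image_iff)
qed

lemma finite_iid: "finite (set_pmf p) \<Longrightarrow> finite (set_pmf (iid_pmf n p))"
  unfolding set_iid using finite_lists_length_eq[of "set_pmf p" n] by (simp add: conj_commute)

lemma E_iid_Suc: "finite (set_pmf p) \<Longrightarrow>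
  E (iid_pmf (Suc n) p) f = E p (\<lambda>z. E (iid_pmf n p) (\<lambda>zs. f (z # zs)))"
  unfolding iid_Suc_map by (simp add: E_map E_pair finite_iid)

lemma pmf_iid: "pmf (iid_pmf n p) zs = (if length zs = n then prod_list (map (pmf p) zs) else 0)"
proof (induction n arbitrary: zs)
  case 0 then show ?case by (simp add: pmf_return)
next
  case (Suc n)
  show ?case
  proof (cases zs)
    case Nil
    then show ?thesis unfolding iid_Suc_map by (auto simp: pmf_eq_0_set_pmf)
  next
    case (Cons z zs')
    have "pmf (iid_pmf (Suc n) p) zs = pmf (pair_pmf p (iid_pmf n p)) (z, zs')"
      unfolding iid_Suc_map Cons
      by (subst pmf_map_inj'[symmetric, of "\<lambda>(x, xs). x # xs"]) (auto simp: inj_def)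
    then show ?thesis using Suc Cons by (simp add: pmf_pair)
  qed
qed

lemma map_iid: "map_pmf (map f) (iid_pmf n p) = iid_pmf n (map_pmf f p)"
proof (induction n)
  case (Suc n)
  have "map_pmf (map f) (iid_pmf (Suc n) p) = bind_pmf p (\<lambda>x. map_pmf ((#) (f x)) (map_pmf (map f) (iid_pmf n p)))"
    by (simp add: map_bind_pmf map_pmf_comp)
  then show ?case by (simp add: Suc bind_map_pmf)
qed simp



lemma log_sum_ineq:
  assumes fin: "finite I" and w: "\<And>i. i \<in> I \<Longrightarrow> w i > 0" and r: "\<And>i. i \<in> I \<Longrightarrow> r i > 0"
  shows "(\<Sum>i\<in>I. w i) * log 2 ((\<Sum>i\<in>I. w i) / (\<Sum>i\<in>I. r i)) \<le> (\<Sum>i\<in>I. w i * log 2 (w i / r i))"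
proof (cases "I = {}")
  case True then show ?thesis by simp
next
  case False
  define W where "W = (\<Sum>i\<in>I. w i)"
  define S where "S = (\<Sum>i\<in>I. r i)"
  have W: "W > 0" unfolding W_def using fin False w by (intro sum_pos) auto
  have S: "S > 0" unfolding S_def using fin False r by (intro sum_pos) auto
  have ln2: "ln (2::real) > 0" by simp
  have key: "w i * log 2 (r i * W / (S * w i)) \<le> (r i * W / S - w i) / ln 2" if i: "i \<in> I" for i
  proof -
    have pos: "r i * W / (S * w i) > 0" using w[OF i] r[OF i] W S by simp
    have "log 2 (r i * W / (S * w i)) = ln (r i * W / (S * w i)) / ln 2" by (simp add: log_def)
    also have "\<dots> \<le> (r i * W / (S * w i) - 1) / ln 2"
      using ln_le_minus_one[OF pos] ln2 by (simp add: divide_right_mono)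
    finally have "w i * log 2 (r i * W / (S * w i)) \<le> w i * ((r i * W / (S * w i) - 1) / ln 2)"
      using w[OF i] by (intro mult_left_mono) auto
    also have "\<dots> = (r i * W / S - w i) / ln 2" using w[OF i] by (simp add: field_simps)
    finally show ?thesis .
  qed
  have "(\<Sum>i\<in>I. w i * log 2 (r i * W / (S * w i))) \<le> (\<Sum>i\<in>I. (r i * W / S - w i) / ln 2)"
    using key by (rule sum_mono)
  also have "\<dots> = ((\<Sum>i\<in>I. r i) * W / S - W) / ln 2"
    unfolding W_def by (simp add: sum_divide_distrib[symmetric] sum_subtractf sum_distrib_right[symmetric])
  also have "\<dots> = 0" using S unfolding S_def by simp
  finally have A: "(\<Sum>i\<in>I. w i * log 2 (r i * W / (S * w i))) \<le> 0" .
  have B: "w i * log 2 (r i * W / (S * w i)) = w i * log 2 (W / S) - w i * log 2 (w i / r i)" if i: "i \<in> I" for i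
  proof -
    have "r i * W / (S * w i) = (W / S) / (w i / r i)" using w[OF i] r[OF i] by (simp add: field_simps)
    then show ?thesis using w[OF i] r[OF i] W S by (simp add: log_divide log_mult right_diff_distrib distrib_left)
  qed
  have "(\<Sum>i\<in>I. w i * log 2 (r i * W / (S * w i))) = W * log 2 (W / S) - (\<Sum>i\<in>I. w i * log 2 (w i / r i))"
  proof -
    have "(\<Sum>i\<in>I. w i * log 2 (r i * W / (S * w i))) = (\<Sum>i\<in>I. w i * log 2 (W / S) - w i * log 2 (w i / r i))"
      by (rule sum.cong) (auto simp: B)
    also have "\<dots> = W * log 2 (W / S) - (\<Sum>i\<in>I. w i * log 2 (w i / r i))"
      by (simp add: sum_subtractf sum_distrib_right[symmetric] W_def)
    finally show ?thesis .
  qed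
  with A show ?thesis unfolding W_def S_def by simp
qed

lemma gibbs:
  assumes "finite I" "\<And>i. i \<in> I \<Longrightarrow> w i > 0" "\<And>i. i \<in> I \<Longrightarrow> r i > 0"
    and "(\<Sum>i\<in>I. r i) \<le> (\<Sum>i\<in>I. w i)"
  shows "0 \<le> (\<Sum>i\<in>I. w i * log 2 (w i / r i))"
proof (cases "I = {}")
  case True then show ?thesis by simp
next
  case False
  have W: "(\<Sum>i\<in>I. w i) > 0" using assms False by (intro sum_pos) auto
  have S: "(\<Sum>i\<in>I. r i) > 0" using assms False by (intro sum_pos) auto
  have "0 \<le> log 2 ((\<Sum>i\<in>I. w i) / (\<Sum>i\<in>I. r i))" using W S assms(4) by simp
  then have "0 \<le> (\<Sum>i\<in>I. w i) * log 2 ((\<Sum>i\<in>I. w i) / (\<Sum>i\<in>I. r i))" using W by simp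
  also have "\<dots> \<le> (\<Sum>i\<in>I. w i * log 2 (w i / r i))" by (rule log_sum_ineq[OF assms(1-3)])
  finally show ?thesis .
qed



lemma ent_E: "ent p = E p (\<lambda>x. log 2 (1 / pmf p x))"
  unfolding ent_def E_def by (simp add: log_recip)

lemma pmf_pos: "x \<in> set_pmf p \<Longrightarrow> pmf p x > 0"
  using pmf_nonneg[of p x] set_pmf_iff[of x p] by linarith

lemma sum_pmf_le1: "finite B \<Longrightarrow> (\<Sum>x\<in>B. pmf p x) \<le> 1"
  by (metis measure_measure_pmf_finite measure_pmf.prob_le_1)

lemma pmf_q:
  fixes P :: "'x pmf" and \<pi> :: "'k pmf"
  assumes fP: "finite (set_pmf P)"
  shows "pmf (map_pmf (\<lambda>(k, x). (g k x, x)) (pair_pmf \<pi> P)) (c, x) = pmf P x * pmf (map_pmf (\<lambda>k. g k x) \<pi>) c"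
proof -
  have eq: "map_pmf (\<lambda>(k, x). (g k x, x)) (pair_pmf \<pi> P) = bind_pmf P (\<lambda>x. map_pmf (\<lambda>c. (c, x)) (map_pmf (\<lambda>k. g k x) \<pi>))"
  proof -
    have "pair_pmf \<pi> P = map_pmf prod.swap (pair_pmf P \<pi>)"
      by (simp add: pair_commute_pmf[of P \<pi>] map_pmf_comp case_prod_unfold)
    then show ?thesis
      by (simp add: map_pmf_comp pair_pmf_def map_bind_pmf case_prod_unfold map_pmf_def[symmetric])
  qed
  have inner: "pmf (map_pmf (\<lambda>c. (c, x')) (map_pmf (\<lambda>k. g k x') \<pi>)) (c, x) =
      (if x' = x then pmf (map_pmf (\<lambda>k. g k x) \<pi>) c else 0)" for x'
  proof (cases "x' = x")
    case True then show ?thesis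
      using pmf_map_inj'[of "\<lambda>c. (c, x)" "map_pmf (\<lambda>k. g k x) \<pi>" c] by (simp add: inj_def)
  next
    case False then show ?thesis by (auto simp: pmf_eq_0_set_pmf)
  qed
  have "pmf (map_pmf (\<lambda>(k, x). (g k x, x)) (pair_pmf \<pi> P)) (c, x) =
     measure_pmf.expectation P (\<lambda>x'. if x' = x then pmf (map_pmf (\<lambda>k. g k x) \<pi>) c else 0)"
    unfolding eq pmf_bind inner ..
  also have "\<dots> = E P (\<lambda>x'. if x' = x then pmf (map_pmf (\<lambda>k. g k x) \<pi>) c else 0)"
    using fP by (simp add: E_integral)
  also have "\<dots> = pmf P x * pmf (map_pmf (\<lambda>k. g k x) \<pi>) c"
    unfolding E_def
    by (cases "x \<in> set_pmf P") (auto simp: if_distrib sum.delta fP pmf_eq_0_set_pmf cong: if_cong)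
  finally show ?thesis .
qed



lemma E_swap: "E p (\<lambda>a. E q (\<lambda>b. h a b)) = E q (\<lambda>b. E p (\<lambda>a. h a b))"
  unfolding E_def by (simp add: sum_distrib_left mult.left_commute sum.swap[of _ "set_pmf p"])

lemma mi_decomp:
  fixes P :: "'x pmf" and \<pi> :: "'k pmf" and g :: "'k \<Rightarrow> 'x \<Rightarrow> 'c"
  assumes fP: "finite (set_pmf P)" and fpi: "finite (set_pmf \<pi>)"
  shows "mutual_info (map_pmf (\<lambda>(k, x). (g k x, x)) (pair_pmf \<pi> P)) =
     E P (\<lambda>x. E \<pi> (\<lambda>k. log 2 (pmf (map_pmf (\<lambda>k. g k x) \<pi>) (g k x) /
                                 pmf (map_pmf (\<lambda>(k, x). g k x) (pair_pmf \<pi> P)) (g k x))))"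
proof -
  define q where "q = map_pmf (\<lambda>(k, x). (g k x, x)) (pair_pmf \<pi> P)"
  define PC where "PC = map_pmf (\<lambda>(k, x). g k x) (pair_pmf \<pi> P)"
  have fq: "finite (set_pmf (pair_pmf \<pi> P))" using fP fpi by simp
  have m1: "map_pmf fst q = PC" unfolding q_def PC_def by (simp add: map_pmf_comp case_prod_unfold)
  have m2: "map_pmf snd q = P" unfolding q_def
    by (simp add: map_pmf_comp case_prod_unfold map_snd_pair_pmf[of \<pi> P, unfolded map_pmf_def[symmetric]])
  have "mutual_info q = E q (\<lambda>z. log 2 (pmf q z / (pmf PC (fst z) * pmf P (snd z))))"
    unfolding mutual_info_def E_def m1 m2 ..
  also have "\<dots> = E (pair_pmf \<pi> P) (\<lambda>(k, x). log 2 (pmf q (g k x, x) / (pmf PC (g k x) * pmf P x)))"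
    unfolding q_def using fq by (simp add: E_map case_prod_unfold)
  also have "\<dots> = E \<pi> (\<lambda>k. E P (\<lambda>x. log 2 (pmf q (g k x, x) / (pmf PC (g k x) * pmf P x))))"
    using fP fpi by (simp add: E_pair)
  also have "\<dots> = E P (\<lambda>x. E \<pi> (\<lambda>k. log 2 (pmf q (g k x, x) / (pmf PC (g k x) * pmf P x))))"
    by (rule E_swap)
  also have "\<dots> = E P (\<lambda>x. E \<pi> (\<lambda>k. log 2 (pmf (map_pmf (\<lambda>k. g k x) \<pi>) (g k x) / pmf PC (g k x))))"
  proof (intro E_cong)
    fix x k assume x: "x \<in> set_pmf P" and k: "k \<in> set_pmf \<pi>"
    have "pmf P x > 0" using x by (rule pmf_pos)
    then show "log 2 (pmf q (g k x, x) / (pmf PC (g k x) * pmf P x)) =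
          log 2 (pmf (map_pmf (\<lambda>k. g k x) \<pi>) (g k x) / pmf PC (g k x))"
      unfolding q_def pmf_q[OF fP] by (simp add: field_simps)
  qed
  finally show ?thesis unfolding q_def PC_def .
qed

lemma D_nonneg:
  fixes P :: "'x pmf" and \<pi> :: "'k pmf" and g :: "'k \<Rightarrow> 'x \<Rightarrow> 'c"
  assumes fP: "finite (set_pmf P)" and fpi: "finite (set_pmf \<pi>)" and x: "x \<in> set_pmf P"
  shows "0 \<le> E \<pi> (\<lambda>k. log 2 (pmf (map_pmf (\<lambda>k. g k x) \<pi>) (g k x) /
                                 pmf (map_pmf (\<lambda>(k, x). g k x) (pair_pmf \<pi> P)) (g k x)))"
proof -
  define W where "W = map_pmf (\<lambda>k. g k x) \<pi>"
  define PC where "PC = map_pmf (\<lambda>(k, x). g k x) (pair_pmf \<pi> P)"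
  have fW: "finite (set_pmf W)" unfolding W_def using fpi by simp
  have "E \<pi> (\<lambda>k. log 2 (pmf W (g k x) / pmf PC (g k x))) = E W (\<lambda>c. log 2 (pmf W c / pmf PC c))"
    unfolding W_def using fpi by (simp add: E_map)
  also have "\<dots> = (\<Sum>c\<in>set_pmf W. pmf W c * log 2 (pmf W c / pmf PC c))" unfolding E_def ..
  also have "0 \<le> \<dots>"
  proof (rule gibbs[OF fW])
    show "\<And>c. c \<in> set_pmf W \<Longrightarrow> 0 < pmf W c" by (rule pmf_pos)
    show "0 < pmf PC c" if "c \<in> set_pmf W" for c
    proof -
      from that obtain k where "k \<in> set_pmf \<pi>" "c = g k x" unfolding W_def by auto
      then have "c \<in> set_pmf PC" unfolding PC_def using x by force
      then show ?thesis by (rule pmf_pos)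
    qed
    show "(\<Sum>c\<in>set_pmf W. pmf PC c) \<le> (\<Sum>c\<in>set_pmf W. pmf W c)"
      using sum_pmf_le1[OF fW, of PC] sum_pmf_eq_1[OF fW, of W] by simp
  qed
  finally show ?thesis unfolding W_def PC_def .
qed



lemma log_inv_mono: "0 < b \<Longrightarrow> b \<le> a \<Longrightarrow> log 2 (1 / a) \<le> log 2 (1 / b)"
  by (subst log_le_cancel_iff) (auto simp: divide_simps)

lemma H_bound:
  fixes \<pi> :: "'k pmf" and g' :: "'k \<Rightarrow> 'c" and u :: "'c \<Rightarrow> 'e" and \<kappa> :: "'k \<Rightarrow> 'j"
  assumes fpi: "finite (set_pmf \<pi>)"
    and h1: "\<And>k k'. k \<in> set_pmf \<pi> \<Longrightarrow> k' \<in> set_pmf \<pi> \<Longrightarrow> \<kappa> k = \<kappa> k' \<Longrightarrow> u (g' k) = u (g' k')"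
    and h2: "\<And>k. k \<in> set_pmf \<pi> \<Longrightarrow> g' k \<in> G" and fG: "finite G"
    and h3: "\<And>e. card {c\<in>G. u c = e} \<le> N" and N: "N > 0"
  shows "E \<pi> (\<lambda>k. log 2 (1 / pmf (map_pmf g' \<pi>) (g' k))) \<le> log 2 N + ent (map_pmf \<kappa> \<pi>)"
proof -
  define W where "W = map_pmf g' \<pi>"
  define W1 where "W1 = map_pmf u W"
  define T where "T = set_pmf W"
  define r where "r c = pmf W1 (u c) / N" for c
  have fT: "finite T" unfolding T_def W_def using fpi by simp
  have TG: "T \<subseteq> G" unfolding T_def W_def using h2 by auto
  have rpos: "r c > 0" if "c \<in> T" for c
  proof -
    have "u c \<in> set_pmf W1" unfolding W1_def using that T_def by auto
    then have "pmf W1 (u c) > 0" by (rule pmf_pos)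
    then show ?thesis unfolding r_def using N by simp
  qed
  have rsum: "(\<Sum>c\<in>T. r c) \<le> (\<Sum>c\<in>T. pmf W c)"
  proof -
    have "(\<Sum>c\<in>T. r c) = (\<Sum>e\<in>u ` T. (\<Sum>c\<in>{c\<in>T. u c = e}. r c))"
      using fT by (rule sum.image_gen)
    also have "\<dots> = (\<Sum>e\<in>u ` T. real (card {c\<in>T. u c = e}) * (pmf W1 e / N))"
      unfolding r_def by (intro sum.cong) auto
    also have "\<dots> \<le> (\<Sum>e\<in>u ` T. pmf W1 e)"
    proof (intro sum_mono)
      fix e
      have "card {c\<in>T. u c = e} \<le> card {c\<in>G. u c = e}" using TG fG by (intro card_mono) auto
      also have "\<dots> \<le> N" by (rule h3)
      finally have "real (card {c\<in>T. u c = e}) \<le> real N" by simp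
      then have "real (card {c\<in>T. u c = e}) * (pmf W1 e / N) \<le> real N * (pmf W1 e / N)"
        by (intro mult_right_mono) auto
      then show "real (card {c\<in>T. u c = e}) * (pmf W1 e / N) \<le> pmf W1 e" using N by simp
    qed
    also have "\<dots> \<le> 1" using fT by (intro sum_pmf_le1) auto
    also have "\<dots> = (\<Sum>c\<in>T. pmf W c)" using sum_pmf_eq_1[OF fT, of W] T_def by simp
    finally show ?thesis .
  qed
  have G0: "0 \<le> (\<Sum>c\<in>T. pmf W c * log 2 (pmf W c / r c))"
    by (rule gibbs[OF fT _ rpos rsum]) (auto simp: T_def pmf_pos)
  have "E \<pi> (\<lambda>k. log 2 (1 / pmf W (g' k))) = E W (\<lambda>c. log 2 (1 / pmf W c))"
    unfolding W_def using fpi by (simp add: E_map)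
  also have "\<dots> = (\<Sum>c\<in>T. pmf W c * log 2 (1 / pmf W c))" unfolding E_def T_def ..
  also have "\<dots> \<le> (\<Sum>c\<in>T. pmf W c * log 2 (1 / r c))"
  proof -
    have "(\<Sum>c\<in>T. pmf W c * log 2 (pmf W c / r c)) = (\<Sum>c\<in>T. pmf W c * log 2 (1 / r c)) - (\<Sum>c\<in>T. pmf W c * log 2 (1 / pmf W c))"
      unfolding sum_subtractf[symmetric]
      by (intro sum.cong) (auto simp: log_divide rpos T_def pmf_pos log_recip right_diff_distrib less_imp_neq[symmetric])
    with G0 show ?thesis by simp
  qed
  also have "\<dots> = E W (\<lambda>c. log 2 N + log 2 (1 / pmf W1 (u c)))"
    unfolding E_def T_def
  proof (intro sum.cong refl)
    fix c assume c: "c \<in> set_pmf W"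
    then have "pmf W1 (u c) / N > 0" using rpos[unfolded r_def T_def] by auto
    then have "pmf W1 (u c) > 0" using N by (simp add: zero_less_divide_iff)
    then show "pmf W c * log 2 (1 / r c) = pmf W c * (log 2 N + log 2 (1 / pmf W1 (u c)))"
      using N by (simp add: r_def log_divide log_recip)
  qed
  also have "\<dots> = log 2 N + E \<pi> (\<lambda>k. log 2 (1 / pmf W1 (u (g' k))))"
    unfolding W_def using fpi by (simp add: E_map E_add E_const)
  also have "\<dots> \<le> log 2 N + E \<pi> (\<lambda>k. log 2 (1 / pmf (map_pmf \<kappa> \<pi>) (\<kappa> k)))"
  proof -
    have "log 2 (1 / pmf W1 (u (g' k))) \<le> log 2 (1 / pmf (map_pmf \<kappa> \<pi>) (\<kappa> k))" if k: "k \<in> set_pmf \<pi>" for k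
    proof (rule log_inv_mono)
      show "0 < pmf (map_pmf \<kappa> \<pi>) (\<kappa> k)" using k by (intro pmf_pos) auto
      have "pmf (map_pmf \<kappa> \<pi>) (\<kappa> k) = (\<Sum>k'\<in>set_pmf \<pi> \<inter> \<kappa> -` {\<kappa> k}. pmf \<pi> k')"
        by (simp add: pmf_map prob_finite fpi)
      also have "\<dots> \<le> (\<Sum>k'\<in>set_pmf \<pi> \<inter> (\<lambda>k. u (g' k)) -` {u (g' k)}. pmf \<pi> k')"
        using fpi h1[OF _ k] by (intro sum_mono2) auto
      also have "\<dots> = pmf W1 (u (g' k))" unfolding W1_def W_def
        by (simp add: pmf_map prob_finite fpi map_pmf_comp)
      finally show "pmf (map_pmf \<kappa> \<pi>) (\<kappa> k) \<le> pmf W1 (u (g' k))" .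
    qed
    then show ?thesis by (simp add: E_mono)
  qed
  also have "\<dots> = log 2 N + ent (map_pmf \<kappa> \<pi>)"
    unfolding ent_E using fpi by (simp add: E_map)
  finally show ?thesis unfolding W_def .
qed



lemma core:
  fixes P :: "'x pmf" and \<pi> :: "'k pmf" and g :: "'k \<Rightarrow> 'x \<Rightarrow> 'c" and u :: "'c \<Rightarrow> 'e" and \<kappa> :: "'k \<Rightarrow> 'j"
  assumes fP: "finite (set_pmf P)" and fpi: "finite (set_pmf \<pi>)"
    and AP: "A \<subseteq> set_pmf P" and apos: "measure_pmf.prob P A > 0"
    and h1: "\<And>x k k'. x \<in> A \<Longrightarrow> k \<in> set_pmf \<pi> \<Longrightarrow> k' \<in> set_pmf \<pi> \<Longrightarrow> \<kappa> k = \<kappa> k' \<Longrightarrow> u (g k x) = u (g k' x)"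
    and h2: "\<And>x k. x \<in> A \<Longrightarrow> k \<in> set_pmf \<pi> \<Longrightarrow> g k x \<in> G" and fG: "finite G"
    and h3: "\<And>e. card {c\<in>G. u c = e} \<le> N" and N: "N > 0"
    and inj: "\<And>k. k \<in> set_pmf \<pi> \<Longrightarrow> inj_on (g k) A"
  shows "(\<Sum>x\<in>A. pmf P x * log 2 (1 / pmf P x)) \<le>
     measure_pmf.prob P A * log 2 (1 / measure_pmf.prob P A) +
     mutual_info (map_pmf (\<lambda>(k, x). (g k x, x)) (pair_pmf \<pi> P)) +
     measure_pmf.prob P A * (log 2 N + ent (map_pmf \<kappa> \<pi>))"
proof -
  define a where "a = measure_pmf.prob P A"
  define PC where "PC = map_pmf (\<lambda>(k, x). g k x) (pair_pmf \<pi> P)"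
  define W where "W x = map_pmf (\<lambda>k. g k x) \<pi>" for x
  define S where "S = set_pmf \<pi>"
  define L where "L x = E \<pi> (\<lambda>k. log 2 (1 / pmf PC (g k x)))" for x
  define D where "D x = E \<pi> (\<lambda>k. log 2 (pmf (W x) (g k x) / pmf PC (g k x)))" for x
  have fA: "finite A" using AP fP finite_subset by blast
  have fS: "finite S" using fpi S_def by simp
  have a_sum: "a = (\<Sum>x\<in>A. pmf P x)" unfolding a_def by (simp add: measure_measure_pmf_finite fA)
  have apos': "a > 0" using apos a_def by simp
  have S1: "(\<Sum>k\<in>S. pmf \<pi> k) = 1" using sum_pmf_eq_1[OF fS] S_def by simp
  have Ppos: "x \<in> A \<Longrightarrow> pmf P x > 0" for x using AP by (intro pmf_pos) auto
  have Spos: "k \<in> S \<Longrightarrow> pmf \<pi> k > 0" for k unfolding S_def by (rule pmf_pos)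
  have PCpos: "x \<in> set_pmf P \<Longrightarrow> k \<in> S \<Longrightarrow> pmf PC (g k x) > 0" for x k
    unfolding PC_def S_def by (intro pmf_pos) force
  have Wpos: "k \<in> S \<Longrightarrow> pmf (W x) (g k x) > 0" for x k
    unfolding W_def S_def by (intro pmf_pos) force
  define w where "w = (\<lambda>(x, k). pmf P x * pmf \<pi> k)"
  define r where "r = (\<lambda>(x, k). pmf \<pi> k * pmf PC (g k x))"
  have wsum: "(\<Sum>i\<in>A \<times> S. w i) = a"
    unfolding w_def a_sum sum.cartesian_product[symmetric] using S1
    by (simp add: sum_distrib_left[symmetric])
  have rsum: "(\<Sum>i\<in>A \<times> S. r i) \<le> 1"
  proof -
    have "(\<Sum>i\<in>A \<times> S. r i) = (\<Sum>k\<in>S. pmf \<pi> k * (\<Sum>x\<in>A. pmf PC (g k x)))"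
      unfolding r_def sum.cartesian_product[symmetric]
      by (simp add: sum.swap[of _ A] sum_distrib_left)
    also have "\<dots> \<le> (\<Sum>k\<in>S. pmf \<pi> k * 1)"
    proof (intro sum_mono mult_left_mono)
      fix k assume k: "k \<in> S"
      have "(\<Sum>x\<in>A. pmf PC (g k x)) = (\<Sum>c\<in>g k ` A. pmf PC c)"
        using inj[of k] k S_def by (simp add: sum.reindex)
      also have "\<dots> \<le> 1" using fA by (intro sum_pmf_le1) auto
      finally show "(\<Sum>x\<in>A. pmf PC (g k x)) \<le> 1" .
    qed simp
    finally show ?thesis using S1 by simp
  qed
  have rpos: "i \<in> A \<times> S \<Longrightarrow> r i > 0" for i
    unfolding r_def using Spos PCpos AP by (auto intro!: mult_pos_pos)
  have wpos: "i \<in> A \<times> S \<Longrightarrow> w i > 0" for i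
    unfolding w_def using Spos Ppos by (auto intro!: mult_pos_pos)
  have rsum_pos: "(\<Sum>i\<in>A \<times> S. r i) > 0"
  proof -
    have "A \<noteq> {}" using apos' a_sum by auto
    moreover have "S \<noteq> {}" unfolding S_def by (simp add: set_pmf_not_empty)
    ultimately show ?thesis using rpos fA fS by (intro sum_pos) auto
  qed
  have LS: "(\<Sum>i\<in>A \<times> S. w i) * log 2 ((\<Sum>i\<in>A \<times> S. w i) / (\<Sum>i\<in>A \<times> S. r i)) \<le>
      (\<Sum>i\<in>A \<times> S. w i * log 2 (w i / r i))"
    using fA fS wpos rpos by (intro log_sum_ineq) auto
  have "a * log 2 a \<le> a * log 2 (a / (\<Sum>i\<in>A \<times> S. r i))"
    using apos' rsum rsum_pos by (intro mult_left_mono) (auto simp: divide_simps)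
  also have "\<dots> \<le> (\<Sum>i\<in>A \<times> S. w i * log 2 (w i / r i))" using LS wsum by simp
  also have "\<dots> = (\<Sum>x\<in>A. pmf P x * (log 2 (pmf P x) + L x))"
  proof -
    have "(\<Sum>i\<in>A \<times> S. w i * log 2 (w i / r i)) =
        (\<Sum>x\<in>A. \<Sum>k\<in>S. pmf P x * (pmf \<pi> k * log 2 (pmf P x)) + pmf P x * (pmf \<pi> k * log 2 (1 / pmf PC (g k x))))"
      unfolding sum.cartesian_product
    proof (rule sum.cong[OF refl])
      fix i assume i: "i \<in> A \<times> S"
      then obtain x k where ik: "i = (x, k)" and x: "x \<in> A" and k: "k \<in> S" by auto
      have "pmf P x * pmf \<pi> k / (pmf \<pi> k * pmf PC (g k x)) = pmf P x / pmf PC (g k x)"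
        using Spos[OF k] by simp
      moreover have "log 2 (pmf P x / pmf PC (g k x)) = log 2 (pmf P x) + log 2 (1 / pmf PC (g k x))"
      proof -
        have "pmf PC (g k x) > 0" using PCpos[OF _ k] x AP by auto
        then show ?thesis using Ppos[OF x] by (simp add: log_divide log_recip)
      qed
      ultimately show "w i * log 2 (w i / r i) = (\<lambda>(x, k). pmf P x * (pmf \<pi> k * log 2 (pmf P x)) + pmf P x * (pmf \<pi> k * log 2 (1 / pmf PC (g k x)))) i"
        unfolding w_def r_def ik by (simp add: distrib_left)
    qed
    also have "\<dots> = (\<Sum>x\<in>A. pmf P x * (log 2 (pmf P x) + L x))"
      unfolding L_def E_def S_def[symmetric]
      by (simp add: sum.distrib sum_distrib_left[symmetric] sum_distrib_right[symmetric] S1 distrib_left)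
    finally show ?thesis .
  qed
  finally have step0: "a * log 2 a \<le> (\<Sum>x\<in>A. pmf P x * (log 2 (pmf P x) + L x))" .
  have step1: "(\<Sum>x\<in>A. pmf P x * log 2 (1 / pmf P x)) \<le> a * log 2 (1 / a) + (\<Sum>x\<in>A. pmf P x * L x)"
  proof -
    have e1: "(\<Sum>x\<in>A. pmf P x * (log 2 (pmf P x) + L x)) = (\<Sum>x\<in>A. pmf P x * log 2 (pmf P x)) + (\<Sum>x\<in>A. pmf P x * L x)"
      by (simp add: distrib_left sum.distrib)
    have e2: "(\<Sum>x\<in>A. pmf P x * log 2 (1 / pmf P x)) = - (\<Sum>x\<in>A. pmf P x * log 2 (pmf P x))"
      by (simp add: log_recip sum_negf)
    have e3: "a * log 2 (1 / a) = - (a * log 2 a)" by (simp add: log_recip)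
    show ?thesis using step0 e1 e2 e3 by linarith
  qed
  have Lx: "L x \<le> D x + (log 2 N + ent (map_pmf \<kappa> \<pi>))" if x: "x \<in> A" for x
  proof -
    have xP: "x \<in> set_pmf P" using x AP by auto
    have "L x = E \<pi> (\<lambda>k. log 2 (pmf (W x) (g k x) / pmf PC (g k x)) + log 2 (1 / pmf (W x) (g k x)))"
      unfolding L_def
    proof (rule E_cong)
      fix k assume k: "k \<in> set_pmf \<pi>"
      have w: "pmf (W x) (g k x) > 0" using Wpos k S_def by auto
      have c: "pmf PC (g k x) > 0" using PCpos[OF xP] k S_def by auto
      show "log 2 (1 / pmf PC (g k x)) = log 2 (pmf (W x) (g k x) / pmf PC (g k x)) + log 2 (1 / pmf (W x) (g k x))"
        using w c by (simp add: log_divide log_recip)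
    qed
    then have eq: "L x = D x + E \<pi> (\<lambda>k. log 2 (1 / pmf (W x) (g k x)))"
      unfolding D_def by (simp add: E_add)
    have hb: "E \<pi> (\<lambda>k. log 2 (1 / pmf (W x) (g k x))) \<le> log 2 N + ent (map_pmf \<kappa> \<pi>)"
      unfolding W_def
    proof (rule H_bound[OF fpi _ _ fG h3 N])
      show "\<And>k k'. k \<in> set_pmf \<pi> \<Longrightarrow> k' \<in> set_pmf \<pi> \<Longrightarrow> \<kappa> k = \<kappa> k' \<Longrightarrow> u (g k x) = u (g k' x)"
        using h1 x by blast
      show "\<And>k. k \<in> set_pmf \<pi> \<Longrightarrow> g k x \<in> G" using h2 x by blast
    qed
    show ?thesis using eq hb by linarith
  qed
  have "(\<Sum>x\<in>A. pmf P x * L x) \<le> (\<Sum>x\<in>A. pmf P x * D x) + a * (log 2 N + ent (map_pmf \<kappa> \<pi>))"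
  proof -
    have "(\<Sum>x\<in>A. pmf P x * L x) \<le> (\<Sum>x\<in>A. pmf P x * (D x + (log 2 N + ent (map_pmf \<kappa> \<pi>))))"
      using Lx by (intro sum_mono mult_left_mono) auto
    then show ?thesis by (simp add: distrib_left sum.distrib a_sum sum_distrib_right)
  qed
  also have "(\<Sum>x\<in>A. pmf P x * D x) \<le> (\<Sum>x\<in>set_pmf P. pmf P x * D x)"
  proof (rule sum_mono2[OF fP AP])
    fix x assume "x \<in> set_pmf P - A"
    then have "0 \<le> D x" unfolding D_def W_def PC_def using D_nonneg[OF fP fpi, of x g] by auto
    then show "0 \<le> pmf P x * D x" by simp
  qed
  also have "\<dots> = mutual_info (map_pmf (\<lambda>(k, x). (g k x, x)) (pair_pmf \<pi> P))"
    unfolding mi_decomp[OF fP fpi] E_def D_def W_def PC_def ..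
  finally show ?thesis using step1 a_def by simp
qed



lemma E_return: "E (return_pmf x) f = f x"
  unfolding E_def by simp

lemma E_add_const: "finite (set_pmf q) \<Longrightarrow> E q (\<lambda>x. c + f x) = c + E q f"
  by (simp add: E_add E_const)

lemma iid_moments:
  assumes fp: "finite (set_pmf p)" and m0: "E p \<psi> = 0"
  shows "E (iid_pmf n p) (\<lambda>zs. sum_list (map \<psi> zs)) = 0 \<and>
         E (iid_pmf n p) (\<lambda>zs. (sum_list (map \<psi> zs))^2) = real n * E p (\<lambda>z. (\<psi> z)^2)"
proof (induction n)
  case 0 then show ?case by (simp add: E_return)
next
  case (Suc n)
  have fi: "finite (set_pmf (iid_pmf n p))" using fp by (rule finite_iid)
  have IH1: "E (iid_pmf n p) (\<lambda>zs. sum_list (map \<psi> zs)) = 0" using Suc by blast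
  have IH2: "E (iid_pmf n p) (\<lambda>zs. (sum_list (map \<psi> zs))^2) = real n * E p (\<lambda>z. (\<psi> z)^2)" using Suc by blast
  have A: "E (iid_pmf (Suc n) p) (\<lambda>zs. sum_list (map \<psi> zs)) = 0"
    unfolding E_iid_Suc[OF fp] by (simp add: E_add_const[OF fi] IH1 m0)
  have "E (iid_pmf (Suc n) p) (\<lambda>zs. (sum_list (map \<psi> zs))^2) =
      E p (\<lambda>z. E (iid_pmf n p) (\<lambda>zs. (\<psi> z)^2 + ((2 * \<psi> z) * sum_list (map \<psi> zs) + (sum_list (map \<psi> zs))^2)))"
    unfolding E_iid_Suc[OF fp] by (simp add: power2_sum algebra_simps)
  also have "\<dots> = E p (\<lambda>z. (\<psi> z)^2 + real n * E p (\<lambda>z. (\<psi> z)^2))"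
    by (simp add: E_add_const[OF fi] E_add E_cmult IH1 IH2 E_const[OF fi])
  also have "\<dots> = real (Suc n) * E p (\<lambda>z. (\<psi> z)^2)"
    by (simp add: E_add E_const[OF fp] algebra_simps)
  finally show ?case using A by blast
qed

lemma cheb_iid:
  assumes fp: "finite (set_pmf p)" and m0: "E p \<psi> = 0" and t: "t > 0"
  shows "measure_pmf.prob (iid_pmf n p) {zs. t \<le> \<bar>sum_list (map \<psi> zs)\<bar>} \<le> real n * E p (\<lambda>z. (\<psi> z)^2) / t^2"
proof -
  have "{zs. t \<le> \<bar>sum_list (map \<psi> zs)\<bar>} = {zs. t^2 \<le> (sum_list (map \<psi> zs))^2}"
    using t by (auto simp: abs_le_square_iff[symmetric])
  moreover have "measure_pmf.prob (iid_pmf n p) {zs. t^2 \<le> (sum_list (map \<psi> zs))^2} \<le>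
      E (iid_pmf n p) (\<lambda>zs. (sum_list (map \<psi> zs))^2) / t^2"
    using t by (intro markov_E finite_iid fp) auto
  ultimately show ?thesis using iid_moments[OF fp m0, of n] by simp
qed

lemma prod_list_pos': "(\<And>z. z \<in> set zs \<Longrightarrow> (f z::real) > 0) \<Longrightarrow> prod_list (map f zs) > 0"
  by (induction zs) auto

lemma log_prod_list:
  "(\<And>z. z \<in> set zs \<Longrightarrow> f z > 0) \<Longrightarrow>
   log 2 (1 / prod_list (map f zs)) = sum_list (map (\<lambda>z. log 2 (1 / f z)) zs)"
proof (induction zs)
  case Nil then show ?case by simp
next
  case (Cons z zs)
  have "f z > 0" using Cons by simp
  moreover have "prod_list (map f zs) > 0" using Cons.prems by (intro prod_list_pos') auto
  ultimately show ?case using Cons by (simp add: log_recip log_mult_pos)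
qed

lemma swap_zip: "zip (map snd zs) (map fst zs) = map prod.swap zs"
  by (induction zs) auto

lemma pmf_swap: "pmf (swap_pmf p) (v, u) = pmf p (u, v)"
proof -
  have "pmf (map_pmf (\<lambda>(u, v). (v, u)) p) ((\<lambda>(u, v). (v, u)) (u, v)) = pmf p (u, v)"
    by (rule pmf_map_inj') (auto simp: inj_def)
  then show ?thesis unfolding swap_pmf_def by simp
qed

lemma swap_snd: "map_pmf snd (swap_pmf p) = map_pmf fst p"
  unfolding swap_pmf_def by (simp add: map_pmf_comp case_prod_unfold)



lemma set_block: "set_pmf (block_pmf n p) = (\<lambda>zs. (map fst zs, map snd zs)) ` set_pmf (iid_pmf n p)"
  unfolding block_pmf_def by simp

lemma block_len: "(x1, x2) \<in> set_pmf (block_pmf n p) \<Longrightarrow> length x1 = n \<and> length x2 = n"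
  unfolding set_block set_iid by auto

lemma finite_block: "finite (set_pmf p) \<Longrightarrow> finite (set_pmf (block_pmf n p))"
  unfolding set_block by (simp add: finite_iid)

lemma pmf_block:
  assumes "length x1 = n" "length x2 = n"
  shows "pmf (block_pmf n p) (x1, x2) = block_joint p x1 x2"
proof -
  have inj: "inj (\<lambda>zs. (map fst zs, map snd zs))"
    by (rule injI) (metis zip_map_fst_snd prod.inject)
  have "pmf (block_pmf n p) (x1, x2) = pmf (block_pmf n p) ((\<lambda>zs. (map fst zs, map snd zs)) (zip x1 x2))"
    using assms by simp
  also have "\<dots> = pmf (iid_pmf n p) (zip x1 x2)"
    unfolding block_pmf_def by (rule pmf_map_inj'[OF inj])
  also have "\<dots> = block_joint p x1 x2"
    using assms by (simp add: pmf_iid block_joint_def case_prod_unfold)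
  finally show ?thesis .
qed

lemma map_fst_block: "map_pmf fst (block_pmf n p) = iid_pmf n (map_pmf fst p)"
  unfolding block_pmf_def by (simp add: map_pmf_comp map_iid[symmetric])

lemma map_snd_block: "map_pmf snd (block_pmf n p) = iid_pmf n (map_pmf snd p)"
  unfolding block_pmf_def by (simp add: map_pmf_comp map_iid[symmetric])

lemma ent_iid: assumes fq: "finite (set_pmf q)" shows "ent (iid_pmf n q) = real n * ent q"
proof (induction n)
  case 0 then show ?case by (simp add: ent_E E_return)
next
  case (Suc n)
  have fi: "finite (set_pmf (iid_pmf n q))" using fq by (rule finite_iid)
  have "ent (iid_pmf (Suc n) q) = E (iid_pmf (Suc n) q) (\<lambda>zs. log 2 (1 / pmf (iid_pmf (Suc n) q) zs))"
    by (rule ent_E)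
  also have "\<dots> = E q (\<lambda>z. E (iid_pmf n q) (\<lambda>zs. log 2 (1 / pmf (iid_pmf (Suc n) q) (z # zs))))"
    by (rule E_iid_Suc[OF fq])
  also have "\<dots> = E q (\<lambda>z. E (iid_pmf n q) (\<lambda>zs. log 2 (1 / pmf q z) + log 2 (1 / pmf (iid_pmf n q) zs)))"
  proof (intro E_cong)
    fix z zs assume z: "z \<in> set_pmf q" and zs: "zs \<in> set_pmf (iid_pmf n q)"
    have l: "length zs = n" using zs by (simp add: set_iid)
    have "pmf (iid_pmf (Suc n) q) (z # zs) = pmf q z * pmf (iid_pmf n q) zs"
      using l pmf_iid[of "Suc n" q "z # zs"] pmf_iid[of n q zs] by (simp del: iid_pmf.simps)
    moreover have "pmf q z > 0" "pmf (iid_pmf n q) zs > 0" using z zs by (auto intro: pmf_pos)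
    ultimately show "log 2 (1 / pmf (iid_pmf (Suc n) q) (z # zs)) = log 2 (1 / pmf q z) + log 2 (1 / pmf (iid_pmf n q) zs)"
      by (simp add: log_recip log_mult_pos)
  qed
  also have "\<dots> = E q (\<lambda>z. log 2 (1 / pmf q z) + ent (iid_pmf n q))"
    by (simp add: E_add_const[OF fi] ent_E)
  also have "\<dots> = ent q + real n * ent q"
    by (simp add: E_add E_const[OF fq] Suc ent_E[of q])
  finally show ?case by (simp add: algebra_simps)
qed

lemma dev_lemma:
  assumes n: "n > 0" and l: "length zs = n" and d: "\<gamma> < \<bar>(1 / real n) * sum_list (map \<psi> zs) - \<mu>\<bar>"
  shows "real n * \<gamma> \<le> \<bar>sum_list (map (\<lambda>z. \<psi> z - \<mu>) zs)\<bar>"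
proof -
  have s: "sum_list (map (\<lambda>z. \<psi> z - \<mu>) zs) = sum_list (map \<psi> zs) - real n * \<mu>"
    using l by (induction zs arbitrary: n) (auto simp: algebra_simps)
  have "(1 / real n) * sum_list (map \<psi> zs) - \<mu> = (sum_list (map \<psi> zs) - real n * \<mu>) / real n"
    using n by (simp add: field_simps)
  then have "\<bar>(1 / real n) * sum_list (map \<psi> zs) - \<mu>\<bar> = \<bar>sum_list (map \<psi> zs) - real n * \<mu>\<bar> / real n"
    using n by simp
  with d have "\<gamma> < \<bar>sum_list (map \<psi> zs) - real n * \<mu>\<bar> / real n" by simp
  then have "real n * \<gamma> < \<bar>sum_list (map \<psi> zs) - real n * \<mu>\<bar>" using n by (simp add: field_simps)
  then show ?thesis using s by simp
qed



lemma E_swap_pmf: "finite (set_pmf p) \<Longrightarrow> E (swap_pmf p) F = E p (\<lambda>(u, v). F (v, u))"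
  unfolding swap_pmf_def by (simp add: E_map case_prod_unfold)

lemma pmf_swap': "pmf (swap_pmf p) (prod.swap z) = pmf p z"
  by (cases z) (simp add: pmf_swap)

lemma prob_union: "measure_pmf.prob p (A \<union> B) \<le> measure_pmf.prob p A + measure_pmf.prob p B"
  by (intro measure_subadditive) (auto simp: measure_pmf.emeasure_eq_measure)

lemma nu_bound:
  fixes p :: "('a \<times> 'b) pmf"
  assumes fp: "finite (set_pmf p)" and g: "\<gamma> > 0"
  shows "\<exists>V\<ge>0. \<forall>n>0. nu p n \<gamma> \<le> V / (real n * \<gamma>^2)"
proof -
  define f1 where "f1 = (\<lambda>(u, v). pmf p (u, v) / pmf (map_pmf snd p) v)"
  define f2 where "f2 = (\<lambda>(u, v). pmf p (u, v) / pmf (map_pmf fst p) u)"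
  define f3 where "f3 = (\<lambda>(u, v). pmf p (u, v))"
  define \<psi>1 where "\<psi>1 z = log 2 (1 / f1 z) - cond_ent p" for z
  define \<psi>2 where "\<psi>2 z = log 2 (1 / f2 z) - cond_ent (swap_pmf p)" for z
  define \<psi>3 where "\<psi>3 z = log 2 (1 / f3 z) - ent p" for z
  define V where "V = E p (\<lambda>z. (\<psi>1 z)^2) + E p (\<lambda>z. (\<psi>2 z)^2) + E p (\<lambda>z. (\<psi>3 z)^2)"
  have pos: "f1 z > 0 \<and> f2 z > 0 \<and> f3 z > 0" if z: "z \<in> set_pmf p" for z
  proof -
    obtain u v where uv: "z = (u, v)" by force
    have "pmf p (u, v) > 0" using z uv by (intro pmf_pos) simp
    moreover have "pmf (map_pmf snd p) v > 0" using z uv by (intro pmf_pos) force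
    moreover have "pmf (map_pmf fst p) u > 0" using z uv by (intro pmf_pos) force
    ultimately show ?thesis unfolding f1_def f2_def f3_def uv by simp
  qed
  have m1: "E p (\<lambda>z. log 2 (1 / f1 z)) = cond_ent p"
    unfolding E_def cond_ent_def f1_def log_recip by (simp add: case_prod_unfold)
  have m2: "E p (\<lambda>z. log 2 (1 / f2 z)) = cond_ent (swap_pmf p)"
  proof -
    have "cond_ent (swap_pmf p) = E (swap_pmf p) (\<lambda>z. - log 2 (pmf (swap_pmf p) z / pmf (map_pmf fst p) (snd z)))"
      unfolding E_def cond_ent_def swap_snd by simp
    also have "\<dots> = E p (\<lambda>z. - log 2 (f2 z))"
      unfolding E_swap_pmf[OF fp] f2_def
      by (intro E_cong) (auto simp: pmf_swap)
    finally show ?thesis unfolding log_recip by simp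
  qed
  have m3: "E p (\<lambda>z. log 2 (1 / f3 z)) = ent p"
    unfolding ent_E f3_def by (simp add: case_prod_unfold)
  have e1: "E p \<psi>1 = 0" unfolding \<psi>1_def by (simp add: E_diff E_const fp m1)
  have e2: "E p \<psi>2 = 0" unfolding \<psi>2_def by (simp add: E_diff E_const fp m2)
  have e3: "E p \<psi>3 = 0" unfolding \<psi>3_def by (simp add: E_diff E_const fp m3)
  have "V \<ge> 0" unfolding V_def by (intro add_nonneg_nonneg E_nonneg) auto
  moreover have "nu p n \<gamma> \<le> V / (real n * \<gamma>^2)" if n: "n > 0" for n
  proof -
    define h where "h zs = (map fst zs, map snd zs)" for zs :: "('a \<times> 'b) list"
    define B where "B \<psi> = {zs. real n * \<gamma> \<le> \<bar>sum_list (map \<psi> zs)\<bar>}" for \<psi> :: "'a \<times> 'b \<Rightarrow> real"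
    have sub: "h -` (- typ_set p n \<gamma>) \<inter> set_pmf (iid_pmf n p) \<subseteq> B \<psi>1 \<union> B \<psi>2 \<union> B \<psi>3"
    proof
      fix zs assume zs: "zs \<in> h -` (- typ_set p n \<gamma>) \<inter> set_pmf (iid_pmf n p)"
      then have l: "length zs = n" and sz: "set zs \<subseteq> set_pmf p" by (auto simp: set_iid)
      have c1: "block_cond p (map fst zs) (map snd zs) = prod_list (map f1 zs)"
        unfolding block_cond_def zip_map_fst_snd f1_def ..
      have c2: "block_cond (swap_pmf p) (map snd zs) (map fst zs) = prod_list (map f2 zs)"
        unfolding block_cond_def swap_zip swap_snd f2_def
        by (simp add: case_prod_unfold pmf_swap' comp_def)
      have c3: "block_joint p (map fst zs) (map snd zs) = prod_list (map f3 zs)"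
        unfolding block_joint_def zip_map_fst_snd f3_def ..
      have L1: "log 2 (1 / prod_list (map f1 zs)) = sum_list (map (\<lambda>z. log 2 (1 / f1 z)) zs)"
        using pos sz by (intro log_prod_list) auto
      have L2: "log 2 (1 / prod_list (map f2 zs)) = sum_list (map (\<lambda>z. log 2 (1 / f2 z)) zs)"
        using pos sz by (intro log_prod_list) auto
      have L3: "log 2 (1 / prod_list (map f3 zs)) = sum_list (map (\<lambda>z. log 2 (1 / f3 z)) zs)"
        using pos sz by (intro log_prod_list) auto
      from zs l have "\<not> (\<bar>(1 / real n) * log 2 (1 / block_cond p (map fst zs) (map snd zs)) - cond_ent p\<bar> \<le> \<gamma> \<and>
          \<bar>(1 / real n) * log 2 (1 / block_cond (swap_pmf p) (map snd zs) (map fst zs)) - cond_ent (swap_pmf p)\<bar> \<le> \<gamma> \<and>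
          \<bar>(1 / real n) * log 2 (1 / block_joint p (map fst zs) (map snd zs)) - ent p\<bar> \<le> \<gamma>)"
        by (auto simp: h_def typ_set_def)
      then have "\<gamma> < \<bar>(1 / real n) * sum_list (map (\<lambda>z. log 2 (1 / f1 z)) zs) - cond_ent p\<bar> \<or>
                 \<gamma> < \<bar>(1 / real n) * sum_list (map (\<lambda>z. log 2 (1 / f2 z)) zs) - cond_ent (swap_pmf p)\<bar> \<or>
                 \<gamma> < \<bar>(1 / real n) * sum_list (map (\<lambda>z. log 2 (1 / f3 z)) zs) - ent p\<bar>"
        unfolding c1 c2 c3 L1 L2 L3 by linarith
      then show "zs \<in> B \<psi>1 \<union> B \<psi>2 \<union> B \<psi>3"
        unfolding B_def \<psi>1_def \<psi>2_def \<psi>3_def using dev_lemma[OF n l] by blast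
    qed
    have "nu p n \<gamma> = measure_pmf.prob (iid_pmf n p) (h -` (- typ_set p n \<gamma>) \<inter> set_pmf (iid_pmf n p))"
      unfolding nu_def block_pmf_def h_def measure_map_pmf measure_Int_set_pmf ..
    also have "\<dots> \<le> measure_pmf.prob (iid_pmf n p) (B \<psi>1 \<union> B \<psi>2 \<union> B \<psi>3)"
      using sub by (intro measure_pmf.finite_measure_mono) auto
    also have "\<dots> \<le> measure_pmf.prob (iid_pmf n p) (B \<psi>1) + measure_pmf.prob (iid_pmf n p) (B \<psi>2) + measure_pmf.prob (iid_pmf n p) (B \<psi>3)"
      by (meson add_right_mono prob_union order_trans)
    also have "\<dots> \<le> real n * E p (\<lambda>z. (\<psi>1 z)^2) / (real n * \<gamma>)^2 + real n * E p (\<lambda>z. (\<psi>2 z)^2) / (real n * \<gamma>)^2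
                   + real n * E p (\<lambda>z. (\<psi>3 z)^2) / (real n * \<gamma>)^2"
      unfolding B_def using n g
      by (intro add_mono cheb_iid[OF fp] e1 e2 e3) auto
    also have "\<dots> = V / (real n * \<gamma>^2)"
      unfolding V_def using n g by (simp add: field_simps power2_eq_square)
    finally show ?thesis .
  qed
  ultimately show ?thesis by blast
qed



lemma final_step:
  fixes a b MI \<delta> S H H1 R R' \<gamma> LN :: real and n :: nat
  assumes ab: "0 < b" "b \<le> a" and MI: "MI \<le> \<delta>" and d: "0 \<le> \<delta>" and n: "n > 0"
    and S1: "a * (real n * (H - \<gamma>)) \<le> S"
    and S2: "S \<le> a * log 2 (1 / a) + MI + a * (LN + real n * H1)"
    and hLN: "LN \<le> real n * (R' + \<gamma>)" and RR: "R + R' = H"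
  shows "R \<le> H1 + 2 * \<gamma> + (1 / real n) * (\<delta> / b + log 2 (1 / b))"
proof -
  have a: "a > 0" using ab by simp
  have e: "a * (log 2 (1 / a) + MI / a + LN + real n * H1) = a * log 2 (1 / a) + MI + a * (LN + real n * H1)"
    using a by (simp add: field_simps)
  have "a * (real n * (H - \<gamma>)) \<le> a * (log 2 (1 / a) + MI / a + LN + real n * H1)"
    using S1 S2 e by linarith
  then have 1: "real n * (H - \<gamma>) \<le> log 2 (1 / a) + MI / a + LN + real n * H1"
    using a by (simp add: mult_le_cancel_left_pos)
  have 2: "log 2 (1 / a) \<le> log 2 (1 / b)" using ab by (rule log_inv_mono)
  have "MI / a \<le> \<delta> / a" using MI a by (intro divide_right_mono) auto
  also have "\<dots> \<le> \<delta> / b" using ab d by (intro divide_left_mono) auto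
  finally have 3: "MI / a \<le> \<delta> / b" .
  have h1b: "real n * H - real n * \<gamma> \<le> log 2 (1 / a) + MI / a + LN + real n * H1"
    using 1 by (simp only: right_diff_distrib)
  have LNb: "LN \<le> real n * R' + real n * \<gamma>" using hLN by (simp add: distrib_left)
  have RR': "real n * R = real n * H - real n * R'" using RR by (auto simp: algebra_simps)
  have "real n * R \<le> real n * H1 + 2 * (real n * \<gamma>) + (\<delta> / b + log 2 (1 / b))"
    using h1b 2 3 LNb RR' by linarith
  then have "real n * R \<le> real n * (H1 + 2 * \<gamma> + (1 / real n) * (\<delta> / b + log 2 (1 / b)))"
    using n by (simp add: algebra_simps)
  then show ?thesis using n by simp
qed

lemma prob_compl_supp: "measure_pmf.prob P (- set_pmf P) = 0"
  by (metis Int_commute Compl_disjoint measure_Int_set_pmf measure_empty)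

lemma prob_A_lower:
  "measure_pmf.prob P (D \<inter> T \<inter> set_pmf P) \<ge> 1 - measure_pmf.prob P (- D) - measure_pmf.prob P (- T)"
proof -
  have "1 = measure_pmf.prob P ((D \<inter> T \<inter> set_pmf P) \<union> (- D \<union> - T \<union> - set_pmf P))"
  proof -
    have "(D \<inter> T \<inter> set_pmf P) \<union> (- D \<union> - T \<union> - set_pmf P) = UNIV" by auto
    then show ?thesis using measure_pmf.prob_space[of P] by simp
  qed
  also have "\<dots> \<le> measure_pmf.prob P (D \<inter> T \<inter> set_pmf P) + measure_pmf.prob P (- D \<union> - T \<union> - set_pmf P)"
    by (rule prob_union)
  also have "measure_pmf.prob P (- D \<union> - T \<union> - set_pmf P) \<le> measure_pmf.prob P (- D) + measure_pmf.prob P (- T) + 0"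
  proof -
    have "measure_pmf.prob P (- D \<union> - T \<union> - set_pmf P) \<le> measure_pmf.prob P (- D \<union> - T) + measure_pmf.prob P (- set_pmf P)"
      by (rule prob_union)
    also have "measure_pmf.prob P (- D \<union> - T) \<le> measure_pmf.prob P (- D) + measure_pmf.prob P (- T)"
      by (rule prob_union)
    finally show ?thesis by (simp add: prob_compl_supp)
  qed
  finally show ?thesis by simp
qed



theorem proposition2:
  fixes pX pK :: "('a::{finite,field} \<times> 'b::{finite,field}) pmf"
    and \<delta>0 \<epsilon> \<delta> R1 R2 :: real
  assumes "\<delta>0 > 0"
    and "0 < \<epsilon>" and "\<epsilon> < 1"
    and "0 < \<delta>" and "\<delta> \<le> \<delta>0"
    and "(R1, R2) \<in> S_star \<epsilon> \<delta> pX pK"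
  shows "\<forall>\<gamma>>0. \<exists>n0. \<forall>n\<ge>n0.
           R1 \<le> ent (map_pmf fst pK) + 2 * \<gamma> + zeta pX n \<gamma> \<epsilon> \<delta> \<and>
           R2 \<le> ent (map_pmf snd pK) + 2 * \<gamma> + zeta pX n \<gamma> \<epsilon> \<delta>"
proof (intro allI impI)
  fix \<gamma> :: real assume g: "\<gamma> > 0"
  have Rs: "(R1, R2) \<in> R_star \<epsilon> \<delta> pX pK" and RR: "R1 + R2 = ent pX"
    using assms(6) by (auto simp: S_star_def)
  from Rs obtain \<Phi>1 \<Phi>2 \<Psi> C1 C2 \<phi>1 \<phi>2 \<psi> M1 M2 where
    sys: "\<forall>n\<ge>1. is_system n (\<Phi>1 n) (\<Phi>2 n) (\<Psi> n) (C1 n) (C2 n) (\<phi>1 n) (\<phi>2 n) (\<psi> n) (M1 n) (M2 n)" and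
    rates: "\<forall>\<gamma>>0. \<exists>n0. \<forall>n\<ge>n0. n \<ge> 1 \<longrightarrow>
          (1 / real n) * log 2 (real (card (C1 n))) \<le> R1 + \<gamma> \<and>
          (1 / real n) * log 2 (real (card (C2 n))) \<le> R2 + \<gamma> \<and>
          measure_pmf.prob (block_pmf n pX) (- dec_set n (\<phi>1 n) (\<phi>2 n) (\<psi> n)) \<le> \<epsilon> \<and>
          mutual_info (cipher_source_pmf n pX pK (\<Phi>1 n) (\<Phi>2 n)) \<le> \<delta>"
    unfolding R_star_def by blast
  from rates g obtain n0 where n0: "\<forall>n\<ge>n0. n \<ge> 1 \<longrightarrow>
          (1 / real n) * log 2 (real (card (C1 n))) \<le> R1 + \<gamma> \<and>
          (1 / real n) * log 2 (real (card (C2 n))) \<le> R2 + \<gamma> \<and>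
          measure_pmf.prob (block_pmf n pX) (- dec_set n (\<phi>1 n) (\<phi>2 n) (\<psi> n)) \<le> \<epsilon> \<and>
          mutual_info (cipher_source_pmf n pX pK (\<Phi>1 n) (\<Phi>2 n)) \<le> \<delta>" by blast
  have fX: "finite (set_pmf pX)" by (rule finite_subset[OF subset_UNIV]) simp
  have fK: "finite (set_pmf pK)" by (rule finite_subset[OF subset_UNIV]) simp
  obtain V where V: "V \<ge> 0" "\<forall>n>0. nu pX n \<gamma> \<le> V / (real n * \<gamma>^2)"
    using nu_bound[OF fX g] by blast
  define n1 where "n1 = max (max n0 1) (nat \<lceil>2 * V / ((1 - \<epsilon>) * \<gamma>^2)\<rceil>)"
  show "\<exists>n0. \<forall>n\<ge>n0. R1 \<le> ent (map_pmf fst pK) + 2 * \<gamma> + zeta pX n \<gamma> \<epsilon> \<delta> \<and>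
           R2 \<le> ent (map_pmf snd pK) + 2 * \<gamma> + zeta pX n \<gamma> \<epsilon> \<delta>"
  proof (intro exI allI impI)
    fix n assume nn: "n1 \<le> n"
    have n1: "n \<ge> 1" and nge0: "n \<ge> n0" using nn unfolding n1_def by auto
    have npos: "n > 0" using n1 by simp
    have eps1: "1 - \<epsilon> > 0" using assms(3) by simp
    have "2 * V / ((1 - \<epsilon>) * \<gamma>^2) \<le> real n"
      using nn unfolding n1_def by linarith
    then have "2 * V \<le> real n * ((1 - \<epsilon>) * \<gamma>^2)" using eps1 g by (simp add: divide_le_eq)
    then have "V / (real n * \<gamma>^2) \<le> (1 - \<epsilon>) / 2" using npos g by (simp add: field_simps)
    moreover have "nu pX n \<gamma> \<le> V / (real n * \<gamma>^2)" using V(2) npos by blast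
    ultimately have nusmall: "nu pX n \<gamma> \<le> (1 - \<epsilon>) / 2" by linarith
    define b where "b = 1 - nu_eps pX n \<gamma> \<epsilon>"
    have bpos: "b > 0" unfolding b_def nu_eps_def using nusmall eps1 by simp
    have zeta_eq: "zeta pX n \<gamma> \<epsilon> \<delta> = (1 / real n) * (\<delta> / b + log 2 (1 / b))"
      unfolding zeta_def b_def ..
    from n0 nge0 n1 have
      r1: "(1 / real n) * log 2 (real (card (C1 n))) \<le> R1 + \<gamma>" and
      r2: "(1 / real n) * log 2 (real (card (C2 n))) \<le> R2 + \<gamma>" and
      err: "measure_pmf.prob (block_pmf n pX) (- dec_set n (\<phi>1 n) (\<phi>2 n) (\<psi> n)) \<le> \<epsilon>" and
      mi: "mutual_info (cipher_source_pmf n pX pK (\<Phi>1 n) (\<Phi>2 n)) \<le> \<delta>" by auto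
    have sy: "is_system n (\<Phi>1 n) (\<Phi>2 n) (\<Psi> n) (C1 n) (C2 n) (\<phi>1 n) (\<phi>2 n) (\<psi> n) (M1 n) (M2 n)"
      using sys n1 by auto
    have finC1: "finite (C1 n)" and finC2: "finite (C2 n)"
      and inC1: "\<And>k x. length k = n \<Longrightarrow> length x = n \<Longrightarrow> \<Phi>1 n k x \<in> C1 n"
      and inC2: "\<And>k x. length k = n \<Longrightarrow> length x = n \<Longrightarrow> \<Phi>2 n k x \<in> C2 n"
      and deceq: "\<And>k1 k2 x1 x2. length k1 = n \<Longrightarrow> length k2 = n \<Longrightarrow> length x1 = n \<Longrightarrow> length x2 = n \<Longrightarrow>
          \<Psi> n k1 k2 (\<Phi>1 n k1 x1) (\<Phi>2 n k2 x2) = \<psi> n (\<phi>1 n x1) (\<phi>2 n x2)"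
      using sy unfolding is_system_def by (elim conjE; blast)+
    define P where "P = block_pmf n pX"
    define \<pi> where "\<pi> = block_pmf n pK"
    define A where "A = dec_set n (\<phi>1 n) (\<phi>2 n) (\<psi> n) \<inter> typ_set pX n \<gamma> \<inter> set_pmf P"
    define g where "g = (\<lambda>(k :: 'a list \<times> 'b list) (x :: 'a list \<times> 'b list). (\<Phi>1 n (fst k) (fst x), \<Phi>2 n (snd k) (snd x)))"
    have fP: "finite (set_pmf P)" unfolding P_def using fX by (rule finite_block)
    have fpi: "finite (set_pmf \<pi>)" unfolding \<pi>_def using fK by (rule finite_block)
    have AP: "A \<subseteq> set_pmf P" unfolding A_def by auto
    have aprob: "measure_pmf.prob P A \<ge> b"
      using prob_A_lower[of P "dec_set n (\<phi>1 n) (\<phi>2 n) (\<psi> n)" "typ_set pX n \<gamma>"] err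
      unfolding A_def b_def nu_eps_def nu_def P_def by linarith
    have apos: "measure_pmf.prob P A > 0" using aprob bpos by linarith
    have lenK: "length (fst k) = n \<and> length (snd k) = n" if "k \<in> set_pmf \<pi>" for k
      using that block_len[of "fst k" "snd k" n pK] unfolding \<pi>_def by simp
    have lenX: "length (fst x) = n \<and> length (snd x) = n" if "x \<in> set_pmf P" for x
      using that block_len[of "fst x" "snd x" n pX] unfolding P_def by simp
    have h2: "g k x \<in> C1 n \<times> C2 n" if "x \<in> A" "k \<in> set_pmf \<pi>" for x k
    proof -
      have "x \<in> set_pmf P" using that(1) AP by blast
      then show ?thesis using inC1 inC2 lenK[OF that(2)] lenX[of x] unfolding g_def by simp
    qed
    have fG: "finite (C1 n \<times> C2 n)" using finC1 finC2 by simp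
    have inj: "inj_on (g k) A" if k: "k \<in> set_pmf \<pi>" for k
    proof (rule inj_onI)
      fix x y assume x: "x \<in> A" and y: "y \<in> A" and eq: "g k x = g k y"
      have dx: "\<psi> n (\<phi>1 n (fst x)) (\<phi>2 n (snd x)) = x" using x unfolding A_def dec_set_def by auto
      have dy: "\<psi> n (\<phi>1 n (fst y)) (\<phi>2 n (snd y)) = y" using y unfolding A_def dec_set_def by auto
      have lx: "length (fst x) = n \<and> length (snd x) = n" using x AP lenX by blast
      have ly: "length (fst y) = n \<and> length (snd y) = n" using y AP lenX by blast
      have "\<Psi> n (fst k) (snd k) (fst (g k x)) (snd (g k x)) = \<psi> n (\<phi>1 n (fst x)) (\<phi>2 n (snd x))"
        using deceq lenK[OF k] lx unfolding g_def by simp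
      then have e1: "\<Psi> n (fst k) (snd k) (fst (g k x)) (snd (g k x)) = x" using dx by (rule trans)
      have "\<Psi> n (fst k) (snd k) (fst (g k y)) (snd (g k y)) = \<psi> n (\<phi>1 n (fst y)) (\<phi>2 n (snd y))"
        using deceq lenK[OF k] ly unfolding g_def by simp
      then have e2: "\<Psi> n (fst k) (snd k) (fst (g k y)) (snd (g k y)) = y" using dy by (rule trans)
      show "x = y" using e1 e2 eq by metis
    qed
    obtain k0 where k0: "k0 \<in> set_pmf \<pi>" using set_pmf_not_empty[of \<pi>] by blast
    obtain x0 where x0: "x0 \<in> set_pmf P" using set_pmf_not_empty[of P] by blast
    have C1ne: "C1 n \<noteq> {}" using inC1[of "fst k0" "fst x0"] lenK[OF k0] lenX[OF x0] by auto
    have C2ne: "C2 n \<noteq> {}" using inC2[of "snd k0" "snd x0"] lenK[OF k0] lenX[OF x0] by auto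
    have cardC1: "card (C1 n) > 0" using C1ne finC1 by (simp add: card_gt_0_iff)
    have cardC2: "card (C2 n) > 0" using C2ne finC2 by (simp add: card_gt_0_iff)
    have q_eq: "cipher_source_pmf n pX pK (\<Phi>1 n) (\<Phi>2 n) = map_pmf (\<lambda>(k, x). (g k x, x)) (pair_pmf \<pi> P)"
      unfolding cipher_source_pmf_def g_def \<pi>_def P_def by (simp add: case_prod_unfold)
    have lower: "measure_pmf.prob P A * (real n * (ent pX - \<gamma>)) \<le> (\<Sum>x\<in>A. pmf P x * log 2 (1 / pmf P x))"
    proof -
      have fA: "finite A" using AP fP finite_subset by blast
      have "measure_pmf.prob P A * (real n * (ent pX - \<gamma>)) = (\<Sum>x\<in>A. pmf P x * (real n * (ent pX - \<gamma>)))"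
        by (simp add: measure_measure_pmf_finite fA sum_distrib_right)
      also have "\<dots> \<le> (\<Sum>x\<in>A. pmf P x * log 2 (1 / pmf P x))"
      proof (intro sum_mono mult_left_mono)
        fix x assume x: "x \<in> A"
        then have lx: "length (fst x) = n \<and> length (snd x) = n" using AP lenX by blast
        have px: "pmf P x = block_joint pX (fst x) (snd x)"
          using pmf_block[of "fst x" n "snd x" pX] lx unfolding P_def by simp
        have "\<bar>(1 / real n) * log 2 (1 / block_joint pX (fst x) (snd x)) - ent pX\<bar> \<le> \<gamma>"
          using x unfolding A_def typ_set_def by (auto simp: case_prod_unfold)
        then have "ent pX - \<gamma> \<le> (1 / real n) * log 2 (1 / block_joint pX (fst x) (snd x))" by linarith
        then have "ent pX - \<gamma> \<le> (1 / real n) * log 2 (1 / pmf P x)" by (simp only: px)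
        then have "real n * (ent pX - \<gamma>) \<le> real n * ((1 / real n) * log 2 (1 / pmf P x))"
          using npos by (intro mult_left_mono) auto
        then show "real n * (ent pX - \<gamma>) \<le> log 2 (1 / pmf P x)" using npos by simp
      qed simp
      finally show ?thesis .
    qed
    have core1: "(\<Sum>x\<in>A. pmf P x * log 2 (1 / pmf P x)) \<le>
       measure_pmf.prob P A * log 2 (1 / measure_pmf.prob P A) +
       mutual_info (map_pmf (\<lambda>(k, x). (g k x, x)) (pair_pmf \<pi> P)) +
       measure_pmf.prob P A * (log 2 (real (card (C2 n))) + ent (map_pmf fst \<pi>))"
    proof (rule core[OF fP fpi AP apos _ h2 fG _ cardC2 inj])
      show "\<And>x k k'. x \<in> A \<Longrightarrow> k \<in> set_pmf \<pi> \<Longrightarrow> k' \<in> set_pmf \<pi> \<Longrightarrow> fst k = fst k' \<Longrightarrow> fst (g k x) = fst (g k' x)"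
        unfolding g_def by simp
      show "card {c \<in> C1 n \<times> C2 n. fst c = e} \<le> card (C2 n)" for e
      proof -
        have "{c \<in> C1 n \<times> C2 n. fst c = e} \<subseteq> {e} \<times> C2 n" by auto
        moreover have "finite ({e} \<times> C2 n)" using finC2 by simp
        ultimately have "card {c \<in> C1 n \<times> C2 n. fst c = e} \<le> card ({e} \<times> C2 n)" by (rule card_mono[rotated])
        then show ?thesis by (simp add: card_cartesian_product_singleton)
      qed
    qed
    have entK1: "ent (map_pmf fst \<pi>) = real n * ent (map_pmf fst pK)"
      unfolding \<pi>_def map_fst_block by (rule ent_iid) (use fK in simp)
    have entK2: "ent (map_pmf snd \<pi>) = real n * ent (map_pmf snd pK)"
      unfolding \<pi>_def map_snd_block by (rule ent_iid) (use fK in simp)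
    have core2: "(\<Sum>x\<in>A. pmf P x * log 2 (1 / pmf P x)) \<le>
       measure_pmf.prob P A * log 2 (1 / measure_pmf.prob P A) +
       mutual_info (map_pmf (\<lambda>(k, x). (g k x, x)) (pair_pmf \<pi> P)) +
       measure_pmf.prob P A * (log 2 (real (card (C1 n))) + ent (map_pmf snd \<pi>))"
    proof (rule core[OF fP fpi AP apos _ h2 fG _ cardC1 inj])
      show "\<And>x k k'. x \<in> A \<Longrightarrow> k \<in> set_pmf \<pi> \<Longrightarrow> k' \<in> set_pmf \<pi> \<Longrightarrow> snd k = snd k' \<Longrightarrow> snd (g k x) = snd (g k' x)"
        unfolding g_def by simp
      show "card {c \<in> C1 n \<times> C2 n. snd c = e} \<le> card (C1 n)" for e
      proof -
        have "{c \<in> C1 n \<times> C2 n. snd c = e} \<subseteq> C1 n \<times> {e}" by auto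
        moreover have "finite (C1 n \<times> {e})" using finC1 by simp
        ultimately have "card {c \<in> C1 n \<times> C2 n. snd c = e} \<le> card (C1 n \<times> {e})" by (rule card_mono[rotated])
        then show ?thesis by (simp add: card_cartesian_product)
      qed
    qed
    have mi': "mutual_info (map_pmf (\<lambda>(k, x). (g k x, x)) (pair_pmf \<pi> P)) \<le> \<delta>" using mi q_eq by simp
    have LN2: "log 2 (real (card (C2 n))) \<le> real n * (R2 + \<gamma>)"
      using r2 npos by (simp add: field_simps)
    have LN1: "log 2 (real (card (C1 n))) \<le> real n * (R1 + \<gamma>)"
      using r1 npos by (simp add: field_simps)
    have fin1: "R1 \<le> ent (map_pmf fst pK) + 2 * \<gamma> + (1 / real n) * (\<delta> / b + log 2 (1 / b))"
      by (rule final_step[OF bpos aprob mi' _ npos lower core1[unfolded entK1] LN2 RR]) (use assms(4) in simp)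
    have fin2: "R2 \<le> ent (map_pmf snd pK) + 2 * \<gamma> + (1 / real n) * (\<delta> / b + log 2 (1 / b))"
      by (rule final_step[OF bpos aprob mi' _ npos lower core2[unfolded entK2] LN1]) (use RR assms(4) in simp_all)
    show "R1 \<le> ent (map_pmf fst pK) + 2 * \<gamma> + zeta pX n \<gamma> \<epsilon> \<delta> \<and>
          R2 \<le> ent (map_pmf snd pK) + 2 * \<gamma> + zeta pX n \<gamma> \<epsilon> \<delta>"
      using fin1 fin2 zeta_eq by simp
  qed
qed

end
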